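(* Let $\varepsilon>0$ and $n\ge1$. For every agent $k$, $\|\Delta M_{k,n}\|=\|\widehat M_{k,n}-M_{k,n}\|\le\varepsilon$ provided that for all $i\le n-1$ $$\Delta\rho_{k,i}\le\frac{6\varepsilon\, b_\epsilon^{\,n-i-1}}{\pi^2i^2\gamma F_{k,i}\gamma^{n-i-1}(1-\lambda)},$$ where $\pi=3.14159\ldots$ is the numerical constant.
   Context: Constants $\lambda,\gamma\in(0,1)$, $b_\epsilon>0$ with $\gamma<b_\epsilon$. For agent $k$, two sequences of importance ratios $\rho_{k,n},\widehat\rho_{k,n}\in(0,1/b_\epsilon]$ are given (from estimated and full-observation beliefs respectively), with $\Delta\rho_{k,n}=\widehat\rho_{k,n}-\rho_{k,n}$. Define $F_{k,0}=\widehat F_{k,0}=0$, $F_{k,n}=1+\gamma\rho_{k,n-1}F_{k,n-1}$, $\widehat F_{k,n}=1+\gamma\widehat\rho_{k,n-1}\widehat F_{k,n-1}$, $M_{k,n}=\lambda+(1-\lambda)F_{k,n}$, $\widehat M_{k,n}=\lambda+(1-\lambda)\widehat F_{k,n}$. *)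

theory Defs
  imports Complex_Main
begin

fun Fseq :: "real \<Rightarrow> (nat \<Rightarrow> real) \<Rightarrow> nat \<Rightarrow> real" where
  "Fseq \<gamma> \<rho> 0 = 0"
| "Fseq \<gamma> \<rho> (Suc n) = 1 + \<gamma> * \<rho> n * Fseq \<gamma> \<rho> n"

definition Mseq :: "real \<Rightarrow> real \<Rightarrow> (nat \<Rightarrow> real) \<Rightarrow> nat \<Rightarrow> real" where
  "Mseq lam \<gamma> \<rho> n = lam + (1 - lam) * Fseq \<gamma> \<rho> n"

end

theory Submission
  imports Defs "HOL-Analysis.Analysis"
begin

lemma F_ge0: assumes "\<And>m. 0 < r m" "0 < g" shows "0 \<le> Fseq g r m"
proof (induction m)
  case 0 then show ?case by simp
next
  case (Suc m)
  have "0 \<le> g * r m * Fseq g r m" using assms Suc.IH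
    by (meson less_imp_le mult_nonneg_nonneg)
  then show ?case by simp
qed

lemma F_ge1: assumes "\<And>m. 0 < r m" "0 < g" shows "1 \<le> m \<Longrightarrow> 1 \<le> Fseq g r m"
proof (cases m)
  case 0 then show "1 \<le> m \<Longrightarrow> 1 \<le> Fseq g r m" by simp
next
  case (Suc j)
  have "0 \<le> g * r j * Fseq g r j" using assms F_ge0[OF assms, where m=j]
    by (meson less_imp_le mult_nonneg_nonneg)
  then show "1 \<le> m \<Longrightarrow> 1 \<le> Fseq g r m" using Suc by simp
qed

lemma dF_bound:
  assumes g: "0 < g" "g < b" and r: "\<And>m. 0 < r m" and rh: "\<And>m. 0 < rh m \<and> rh m \<le> 1 / b"
  shows "\<bar>Fseq g rh m - Fseq g r m\<bar> \<le> (\<Sum>i<m. g * \<bar>rh i - r i\<bar> * Fseq g r i * (g / b) ^ (m - 1 - i))"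
proof (induction m)
  case 0 then show ?case by simp
next
  case (Suc m)
  have b: "0 < b" using g by simp
  have eq: "Fseq g rh (Suc m) - Fseq g r (Suc m) = g * rh m * (Fseq g rh m - Fseq g r m) + g * (rh m - r m) * Fseq g r m"
    by (simp add: algebra_simps)
  have F0: "0 \<le> Fseq g r m" using F_ge0[OF r g(1)] .
  have "\<bar>g * rh m * (Fseq g rh m - Fseq g r m)\<bar> = g * rh m * \<bar>Fseq g rh m - Fseq g r m\<bar>"
    using g rh[of m] by (simp add: abs_mult)
  also have "\<dots> \<le> (g / b) * \<bar>Fseq g rh m - Fseq g r m\<bar>"
  proof (rule mult_right_mono)
    show "g * rh m \<le> g / b" using rh[of m] g by (simp add: mult_left_mono divide_inverse)
  qed simp
  also have "\<dots> \<le> (g / b) * (\<Sum>i<m. g * \<bar>rh i - r i\<bar> * Fseq g r i * (g / b) ^ (m - 1 - i))"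
    using Suc.IH g b by (intro mult_left_mono) auto
  also have "\<dots> = (\<Sum>i<m. g * \<bar>rh i - r i\<bar> * Fseq g r i * (g / b) ^ (Suc m - 1 - i))"
    unfolding sum_distrib_left
  proof (rule sum.cong)
    fix i assume "i \<in> {..<m}"
    then have "Suc m - 1 - i = Suc (m - 1 - i)" by auto
    then show "g / b * (g * \<bar>rh i - r i\<bar> * Fseq g r i * (g / b) ^ (m - 1 - i)) =
         g * \<bar>rh i - r i\<bar> * Fseq g r i * (g / b) ^ (Suc m - 1 - i)" by simp
  qed simp
  finally have A: "\<bar>g * rh m * (Fseq g rh m - Fseq g r m)\<bar> \<le> (\<Sum>i<m. g * \<bar>rh i - r i\<bar> * Fseq g r i * (g / b) ^ (Suc m - 1 - i))" .
  have B: "\<bar>g * (rh m - r m) * Fseq g r m\<bar> = g * \<bar>rh m - r m\<bar> * Fseq g r m * (g / b) ^ (Suc m - 1 - m)"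
    using g F0 by (simp add: abs_mult)
  show ?case unfolding eq sum.lessThan_Suc
    using abs_triangle_ineq[of "g * rh m * (Fseq g rh m - Fseq g r m)" "g * (rh m - r m) * Fseq g r m"] A B
    by linarith
qed

lemma inv_sq_bound: "(\<Sum>i\<in>{1..<n}. 1 / (real i)\<^sup>2) \<le> pi\<^sup>2 / 6"
proof -
  have S: "(\<lambda>i. 1 / (real i + 1)\<^sup>2) sums (pi\<^sup>2 / 6)"
    using inverse_squares_sums by (simp add: add.commute)
  have "(\<Sum>i\<in>{1..<n}. 1 / (real i)\<^sup>2) = (\<Sum>i<n - 1. 1 / (real i + 1)\<^sup>2)"
  proof (cases n)
    case 0 then show ?thesis by simp
  next
    case (Suc m)
    have "(\<Sum>i\<in>{1..<Suc m}. 1 / (real i)\<^sup>2) = (\<Sum>i<m. 1 / (real i + 1)\<^sup>2)" for m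
      by (induction m) (auto simp: add.commute)
    then show ?thesis using Suc by simp
  qed
  also have "\<dots> \<le> (\<Sum>i. 1 / (real i + 1)\<^sup>2)"
    using S by (intro sum_le_suminf) (auto intro: sums_summable)
  also have "\<dots> = pi\<^sup>2 / 6" using S by (rule sums_unique[symmetric])
  finally show ?thesis .
qed

theorem lemma9:
  fixes lam \<gamma> b \<epsilon> :: real
    and \<rho> \<rho>h :: "'k \<Rightarrow> nat \<Rightarrow> real"
    and n :: nat
  assumes "0 < lam" "lam < 1" "0 < \<gamma>" "\<gamma> < 1" "0 < b" "\<gamma> < b"
    and "\<And>k m. 0 < \<rho> k m \<and> \<rho> k m \<le> 1 / b"
    and "\<And>k m. 0 < \<rho>h k m \<and> \<rho>h k m \<le> 1 / b"
    and "0 < \<epsilon>" "1 \<le> n"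
  shows "\<forall>k. (\<forall>i\<in>{1..n-1}. \<bar>\<rho>h k i - \<rho> k i\<bar>
            \<le> 6 * \<epsilon> * b ^ (n - i - 1) /
               (pi\<^sup>2 * (real i)\<^sup>2 * \<gamma> * Fseq \<gamma> (\<rho> k) i * \<gamma> ^ (n - i - 1) * (1 - lam)))
         \<longrightarrow> \<bar>Mseq lam \<gamma> (\<rho>h k) n - Mseq lam \<gamma> (\<rho> k) n\<bar> \<le> \<epsilon>"
proof (intro allI impI)
  fix k
  assume H: "\<forall>i\<in>{1..n-1}. \<bar>\<rho>h k i - \<rho> k i\<bar>
            \<le> 6 * \<epsilon> * b ^ (n - i - 1) /
               (pi\<^sup>2 * (real i)\<^sup>2 * \<gamma> * Fseq \<gamma> (\<rho> k) i * \<gamma> ^ (n - i - 1) * (1 - lam))"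
  define r where "r = \<rho> k"
  define rh where "rh = \<rho>h k"
  have r: "\<And>m. 0 < r m" using assms(7) r_def by blast
  have rh: "\<And>m. 0 < rh m \<and> rh m \<le> 1 / b" using assms(8) rh_def by blast
  define t where "t i = \<gamma> * \<bar>rh i - r i\<bar> * Fseq \<gamma> r i * (\<gamma> / b) ^ (n - 1 - i)" for i
  have dF: "\<bar>Fseq \<gamma> rh n - Fseq \<gamma> r n\<bar> \<le> (\<Sum>i<n. t i)"
    unfolding t_def by (rule dF_bound[OF assms(3,6) r rh])
  have split: "{..<n} = insert 0 {1..<n}" using assms(10) by auto
  have "(\<Sum>i<n. t i) = (\<Sum>i\<in>{1..<n}. t i)"
    unfolding split by (simp add: t_def)
  also have "\<dots> \<le> (\<Sum>i\<in>{1..<n}. (6 * \<epsilon> / (pi\<^sup>2 * (1 - lam))) * (1 / (real i)\<^sup>2))"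
  proof (rule sum_mono)
    fix i assume i: "i \<in> {1..<n}"
    define e where "e = n - i - 1"
    have e2: "n - 1 - i = e" unfolding e_def by simp
    have Fi: "1 \<le> Fseq \<gamma> r i" using F_ge1[OF r assms(3)] i by auto
    have pos: "0 < pi\<^sup>2 * (real i)\<^sup>2 * \<gamma> * Fseq \<gamma> r i * \<gamma> ^ e * (1 - lam)"
      using i Fi assms by auto
    have Hi: "\<bar>rh i - r i\<bar> \<le> 6 * \<epsilon> * b ^ e / (pi\<^sup>2 * (real i)\<^sup>2 * \<gamma> * Fseq \<gamma> r i * \<gamma> ^ e * (1 - lam))"
      using H i unfolding r_def rh_def e_def by auto
    have "t i = (\<gamma> * Fseq \<gamma> r i * \<gamma> ^ e / b ^ e) * \<bar>rh i - r i\<bar>"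
      unfolding t_def e2 by (simp add: power_divide)
    also have "\<dots> \<le> (\<gamma> * Fseq \<gamma> r i * \<gamma> ^ e / b ^ e) *
        (6 * \<epsilon> * b ^ e / (pi\<^sup>2 * (real i)\<^sup>2 * \<gamma> * Fseq \<gamma> r i * \<gamma> ^ e * (1 - lam)))"
      using Hi Fi assms by (intro mult_left_mono) auto
    also have "\<dots> = (6 * \<epsilon> / (pi\<^sup>2 * (1 - lam))) * (1 / (real i)\<^sup>2)"
      using pos assms(5) Fi assms(2,3) i by (simp add: field_simps)
    finally show "t i \<le> (6 * \<epsilon> / (pi\<^sup>2 * (1 - lam))) * (1 / (real i)\<^sup>2)" .
  qed
  also have "\<dots> = (6 * \<epsilon> / (pi\<^sup>2 * (1 - lam))) * (\<Sum>i\<in>{1..<n}. 1 / (real i)\<^sup>2)"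
    by (simp add: sum_distrib_left)
  also have "\<dots> \<le> (6 * \<epsilon> / (pi\<^sup>2 * (1 - lam))) * (pi\<^sup>2 / 6)"
    using inv_sq_bound assms by (intro mult_left_mono) auto
  also have "\<dots> = \<epsilon> / (1 - lam)" using assms by (simp add: field_simps)
  finally have F: "\<bar>Fseq \<gamma> rh n - Fseq \<gamma> r n\<bar> \<le> \<epsilon> / (1 - lam)" using dF by linarith
  have "\<bar>Mseq lam \<gamma> rh n - Mseq lam \<gamma> r n\<bar> = (1 - lam) * \<bar>Fseq \<gamma> rh n - Fseq \<gamma> r n\<bar>"
  proof -
    have "Mseq lam \<gamma> rh n - Mseq lam \<gamma> r n = (1 - lam) * (Fseq \<gamma> rh n - Fseq \<gamma> r n)"
      unfolding Mseq_def by (simp add: algebra_simps)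
    then show ?thesis using assms(2) by (simp add: abs_mult)
  qed
  also have "\<dots> \<le> (1 - lam) * (\<epsilon> / (1 - lam))" using F assms by (intro mult_left_mono) auto
  also have "\<dots> = \<epsilon>" using assms by simp
  finally show "\<bar>Mseq lam \<gamma> (\<rho>h k) n - Mseq lam \<gamma> (\<rho> k) n\<bar> \<le> \<epsilon>" unfolding r_def rh_def .
qed

end
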